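(* Let $a>0$ and let $Z=f(p\partial_{\xi}+q\partial_{\mu})$ be a zonal flow on $M^{3}_{a}$ which is not identically zero, with $p,q\in\mathbb{R}$ not both zero and $f$ a smooth function. Then $Z$ is an $S^{1}$-zonal flow if and only if $p=0$ or $q/p\in\mathbb{Q}$.
   Context: $M^{3}_{a}:=\{(x,y,z,w)\in\mathbb{R}^{4}:x^{2}+y^{2}=a^{2}(1-z^{2}-w^{2})\}$ with the metric induced from $\mathbb{R}^{4}$; $\partial_{\xi}:=-y\partial_{x}+x\partial_{y}$, $\partial_{\mu}:=-w\partial_{z}+z\partial_{w}$ restricted to $M^{3}_{a}$ (both Killing). Let $\nabla$ be the Levi-Civita connection. A vector field $X$ is Killing if $g(\nabla_{V}X,W)=-g(\nabla_{W}X,V)$ for all $V,W$. A smooth vector field $Z$ is a zonal flow if (1) $Z=fX$ with $f$ smooth and $X$ Killing; (2) $\operatorname{div}Z=0$; (3) $\nabla_{Z}Z=-\operatorname{grad}p$ for some smooth function $p$. $Z$ is an $S^{1}$-zonal flow if (in a representation $Z=fX$ as in (1)) $X$ is the infinitesimal generator of a smooth action of the circle group $S^{1}$ on the manifold. *)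

theory Defs
  imports "HOL-Analysis.Analysis"
begin

type_synonym R4 = "real \<times> real \<times> real \<times> real"

fun Ck_on :: "nat \<Rightarrow> 'a::euclidean_space set \<Rightarrow> ('a \<Rightarrow> 'b::real_normed_vector) \<Rightarrow> bool" where
  "Ck_on 0 U g = continuous_on U g"
| "Ck_on (Suc k) U g =
     (continuous_on U g \<and> (\<forall>x\<in>U. g differentiable (at x)) \<and>
      (\<forall>b\<in>Basis. Ck_on k U (\<lambda>x. frechet_derivative g (at x) b)))"

definition smooth_on :: "'a::euclidean_space set \<Rightarrow> ('a \<Rightarrow> 'b::real_normed_vector) \<Rightarrow> bool" where
  "smooth_on U g \<longleftrightarrow> (\<forall>k. Ck_on k U g)"

definition M :: "real \<Rightarrow> R4 set" where
  "M a = {(x,y,z,w). x\<^sup>2 + y\<^sup>2 = a\<^sup>2 * (1 - z\<^sup>2 - w\<^sup>2)}"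

text \<open>Normal vector (gradient of the defining function) and tangent space.\<close>
definition normal :: "real \<Rightarrow> R4 \<Rightarrow> R4" where
  "normal a v = (case v of (x,y,z,w) \<Rightarrow> (x, y, a\<^sup>2 * z, a\<^sup>2 * w))"

definition tangent :: "real \<Rightarrow> R4 \<Rightarrow> R4 set" where
  "tangent a v = {u. u \<bullet> normal a v = 0}"

definition proj :: "real \<Rightarrow> R4 \<Rightarrow> R4 \<Rightarrow> R4" where
  "proj a v u = u - ((u \<bullet> normal a v) / (normal a v \<bullet> normal a v)) *\<^sub>R normal a v"

definition smooth_ext :: "real \<Rightarrow> (R4 \<Rightarrow> 'b::real_normed_vector) \<Rightarrow> (R4 \<Rightarrow> 'b) \<Rightarrow> bool" where
  "smooth_ext a f g \<longleftrightarrow>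
     (\<exists>U. open U \<and> M a \<subseteq> U \<and> smooth_on U g \<and> (\<forall>v\<in>M a. g v = f v))"

definition smooth_fun :: "real \<Rightarrow> (R4 \<Rightarrow> 'b::real_normed_vector) \<Rightarrow> bool" where
  "smooth_fun a f \<longleftrightarrow> (\<exists>g. smooth_ext a f g)"

definition ext :: "real \<Rightarrow> (R4 \<Rightarrow> 'b::real_normed_vector) \<Rightarrow> (R4 \<Rightarrow> 'b)" where
  "ext a f = (SOME g. smooth_ext a f g)"

text \<open>Derivative at v in M along a vector u (independent of the extension for tangent u).\<close>
definition dderiv :: "real \<Rightarrow> (R4 \<Rightarrow> 'b::real_normed_vector) \<Rightarrow> R4 \<Rightarrow> R4 \<Rightarrow> 'b" where
  "dderiv a f v u = frechet_derivative (ext a f) (at v) u"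

definition vector_field :: "real \<Rightarrow> (R4 \<Rightarrow> R4) \<Rightarrow> bool" where
  "vector_field a X \<longleftrightarrow> smooth_fun a X \<and> (\<forall>v\<in>M a. X v \<in> tangent a v)"

text \<open>Levi-Civita connection of the induced metric: tangential part of the ambient derivative.\<close>
definition nabla :: "real \<Rightarrow> (R4 \<Rightarrow> R4) \<Rightarrow> (R4 \<Rightarrow> R4) \<Rightarrow> R4 \<Rightarrow> R4" where
  "nabla a V X v = proj a v (dderiv a X v (V v))"

definition killing :: "real \<Rightarrow> (R4 \<Rightarrow> R4) \<Rightarrow> bool" where
  "killing a X \<longleftrightarrow> vector_field a X \<and>
     (\<forall>V W. vector_field a V \<and> vector_field a W \<longrightarrow>
        (\<forall>v\<in>M a. nabla a V X v \<bullet> W v = - (nabla a W X v \<bullet> V v)))"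

text \<open>Divergence = trace of (u \<mapsto> nabla_u X) on the tangent space
  (= trace over R^4 of P o DX o P, P the tangential projection).\<close>
definition divergence :: "real \<Rightarrow> (R4 \<Rightarrow> R4) \<Rightarrow> R4 \<Rightarrow> real" where
  "divergence a X v = (\<Sum>b\<in>Basis. dderiv a X v (proj a v b) \<bullet> proj a v b)"

definition grad :: "real \<Rightarrow> (R4 \<Rightarrow> real) \<Rightarrow> R4 \<Rightarrow> R4" where
  "grad a P v = proj a v (\<Sum>b\<in>Basis. dderiv a P v b *\<^sub>R b)"

definition dxi :: "R4 \<Rightarrow> R4" where
  "dxi v = (case v of (x,y,z,w) \<Rightarrow> (-y, x, 0, 0))"

definition dmu :: "R4 \<Rightarrow> R4" where
  "dmu v = (case v of (x,y,z,w) \<Rightarrow> (0, 0, -w, z))"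

definition zonal_flow :: "real \<Rightarrow> (R4 \<Rightarrow> R4) \<Rightarrow> bool" where
  "zonal_flow a Z \<longleftrightarrow> vector_field a Z \<and>
     (\<exists>f X. smooth_fun a f \<and> killing a X \<and> (\<forall>v\<in>M a. Z v = f v *\<^sub>R X v)) \<and>
     (\<forall>v\<in>M a. divergence a Z v = 0) \<and>
     (\<exists>P. smooth_fun a P \<and> (\<forall>v\<in>M a. nabla a Z Z v = - grad a P v))"

text \<open>X generates a smooth action of S^1 = R/TZ (T > 0) on M.\<close>
definition S1_generator :: "real \<Rightarrow> (R4 \<Rightarrow> R4) \<Rightarrow> bool" where
  "S1_generator a X \<longleftrightarrow>
     (\<exists>\<Phi> :: real \<Rightarrow> R4 \<Rightarrow> R4. \<exists>T>0.
        (\<exists>U. open U \<and> UNIV \<times> M a \<subseteq> U \<and> smooth_on U (\<lambda>(t,v). \<Phi> t v)) \<and>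
        (\<forall>t. \<forall>v\<in>M a. \<Phi> t v \<in> M a) \<and>
        (\<forall>v\<in>M a. \<Phi> 0 v = v) \<and>
        (\<forall>s t. \<forall>v\<in>M a. \<Phi> (s + t) v = \<Phi> s (\<Phi> t v)) \<and>
        (\<forall>v\<in>M a. \<Phi> T v = v) \<and>
        (\<forall>v\<in>M a. ((\<lambda>t. \<Phi> t v) has_vector_derivative X v) (at 0)))"

definition S1_zonal_flow :: "real \<Rightarrow> (R4 \<Rightarrow> R4) \<Rightarrow> bool" where
  "S1_zonal_flow a Z \<longleftrightarrow> zonal_flow a Z \<and>
     (\<exists>f X. smooth_fun a f \<and> killing a X \<and> (\<forall>v\<in>M a. Z v = f v *\<^sub>R X v) \<and> S1_generator a X)"

end

theory Submission
  imports Defs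
begin
lemma M_mem: "(x,y,z,w) \<in> M a \<longleftrightarrow> x^2+y^2 = a^2*(1-z^2-w^2)"
  by (simp add: M_def)

lemma normal_simp: "normal a (x,y,z,w) = (x,y,a^2*z,a^2*w)"
  by (simp add: normal_def)

lemma tangent_iff: "(u1,u2,u3,u4) \<in> tangent a (x,y,z,w) \<longleftrightarrow> u1*x+u2*y+u3*(a^2*z)+u4*(a^2*w) = 0"
  by (simp add: tangent_def normal_def add.assoc)

lemma vd_chain:
  assumes "(gam has_vector_derivative u) (at t)" "G differentiable at (gam t)"
  shows "((\<lambda>s. G (gam s)) has_vector_derivative frechet_derivative G (at (gam t)) u) (at t)"
proof -
  have d: "(G has_derivative frechet_derivative G (at (gam t))) (at (gam t))"
    using assms(2) frechet_derivative_works by blast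
  have l: "linear (frechet_derivative G (at (gam t)))"
    using d has_derivative_linear by blast
  have "((G \<circ> gam) has_derivative (frechet_derivative G (at (gam t)) \<circ> (\<lambda>x. x *\<^sub>R u))) (at t)"
    using diff_chain_at[OF assms(1)[unfolded has_vector_derivative_def] d] .
  moreover have "(frechet_derivative G (at (gam t)) \<circ> (\<lambda>x. x *\<^sub>R u)) = (\<lambda>x. x *\<^sub>R frechet_derivative G (at (gam t)) u)"
    using l by (auto simp: linear_scale)
  ultimately show ?thesis by (simp add: has_vector_derivative_def o_def)
qed

lemma deriv_indep:
  assumes a: "a > 0" and vM: "v \<in> M a" and ut: "u \<in> tangent a v"
    and d1: "G1 differentiable at v" and d2: "G2 differentiable at v"
    and eq: "\<forall>w\<in>M a. G1 w = G2 w"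
  shows "frechet_derivative G1 (at v) u = frechet_derivative G2 (at v) u"
proof -
  obtain x y z w where v: "v = (x,y,z,w)" by (cases v) auto
  obtain u1 u2 u3 u4 where u: "u = (u1,u2,u3,u4)" by (cases u) auto
  have hM: "x^2+y^2 = a^2*(1-z^2-w^2)" using vM v M_mem by auto
  have ht: "u1*x+u2*y+u3*(a^2*z)+u4*(a^2*w) = 0" using ut u v tangent_iff by auto
  define Qu where "Qu = u1^2+u2^2+a^2*u3^2+a^2*u4^2"
  have Qu: "Qu \<ge> 0" unfolding Qu_def by simp
  define lam where "lam s = a / sqrt(a^2 + s^2*Qu)" for s
  define gam where "gam s = lam s *\<^sub>R (v + s *\<^sub>R u)" for s
  have Dpos: "a^2 + s^2*Qu > 0" for s using Qu a by (simp add: add_pos_nonneg)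
  have lam2: "(lam s)^2 = a^2 / (a^2 + s^2*Qu)" for s
    using Dpos[of s] by (simp add: lam_def power_divide)
  have br: "(x+s*u1)^2 + (y+s*u2)^2 + a^2*(z+s*u3)^2 + a^2*(w+s*u4)^2 = a^2 + s^2*Qu" for s
    using hM ht unfolding Qu_def by algebra
  have inM: "gam s \<in> M a" for s
  proof -
    have "(lam s)^2 * ((x+s*u1)^2 + (y+s*u2)^2) = a^2*(1 - (lam s)^2*((z+s*u3)^2+(w+s*u4)^2))"
    proof -
      have LD: "(lam s)^2 * (a^2 + s^2*Qu) = a^2" using lam2[of s] Dpos[of s] by simp
      have "(lam s)^2 * ((x+s*u1)^2 + (y+s*u2)^2) + a^2*((lam s)^2*((z+s*u3)^2+(w+s*u4)^2))
           = (lam s)^2 * ((x+s*u1)^2 + (y+s*u2)^2 + a^2*(z+s*u3)^2 + a^2*(w+s*u4)^2)"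
        by (simp add: algebra_simps)
      also have "\<dots> = a^2" using br[of s] LD by simp
      finally show ?thesis by (simp add: algebra_simps)
    qed
    then show ?thesis unfolding gam_def v u by (simp add: M_mem) algebra
  qed
  have g0: "gam 0 = v" using a by (simp add: gam_def lam_def)
  have ld: "(lam has_real_derivative 0) (at 0)"
    unfolding lam_def[abs_def] using a by (auto intro!: derivative_eq_intros)
  have gd0: "((\<lambda>s. v + s *\<^sub>R u) has_vector_derivative u) (at 0)"
    by (auto intro!: derivative_eq_intros)
  have gd: "(gam has_vector_derivative u) (at 0)"
  proof -
    have "(gam has_vector_derivative (lam 0 *\<^sub>R u + 0 *\<^sub>R (v + 0 *\<^sub>R u))) (at 0)"
      unfolding gam_def[abs_def] using has_vector_derivative_scaleR[OF ld gd0] by simp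
    moreover have "lam 0 = 1" using a by (simp add: lam_def)
    ultimately show ?thesis by simp
  qed
  have c1: "((\<lambda>s. G1 (gam s)) has_vector_derivative frechet_derivative G1 (at v) u) (at 0)"
    using vd_chain[OF gd, of G1] d1 g0 by simp
  have c2: "((\<lambda>s. G2 (gam s)) has_vector_derivative frechet_derivative G2 (at v) u) (at 0)"
    using vd_chain[OF gd, of G2] d2 g0 by simp
  have "(\<lambda>s. G1 (gam s)) = (\<lambda>s. G2 (gam s))" using eq inM by auto
  then show ?thesis using c1 c2 vector_derivative_unique_at by metis
qed

lemma Ck_affine:
  fixes L :: "'a::euclidean_space \<Rightarrow> 'b::real_normed_vector"
  assumes "linear L"
  shows "Ck_on k U (\<lambda>v. L v + c)"
  using assms
proof (induction k arbitrary: L c)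
  case 0
  have "continuous_on U L" using 0 by (intro linear_continuous_on) (simp add: linear_conv_bounded_linear)
  then have "continuous_on U (\<lambda>v. L v + c)" by (intro continuous_on_add continuous_on_const)
  then show ?case by simp
next
  case (Suc k)
  have cL: "continuous_on U L" using Suc.prems by (intro linear_continuous_on) (simp add: linear_conv_bounded_linear)
  then have c: "continuous_on U (\<lambda>v. L v + c)" by (intro continuous_on_add continuous_on_const)
  have hd: "((\<lambda>v. L v + c) has_derivative L) (at x)" for x
    using has_derivative_add_const[OF linear_imp_has_derivative[OF Suc.prems]] .
  have fd: "frechet_derivative (\<lambda>v. L v + c) (at x) = L" for x
    using frechet_derivative_at[OF hd] by simp
  have "Ck_on k U (\<lambda>v. (\<lambda>_. 0) v + L b)" for b
    by (rule Suc.IH) (simp add: linear_zero)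
  then have "Ck_on k U (\<lambda>x. frechet_derivative (\<lambda>v. L v + c) (at x) b)" for b
    by (simp add: fd)
  moreover have "(\<lambda>v. L v + c) differentiable (at x)" for x using hd by (auto simp: differentiable_def)
  ultimately show ?case using c by simp
qed

lemma smooth_linear: "linear L \<Longrightarrow> smooth_on U L"
  using Ck_affine[of L _ U 0] by (simp add: smooth_on_def)

lemma smooth_ext_props:
  assumes "smooth_fun a f"
  shows "\<exists>U. open U \<and> M a \<subseteq> U \<and> smooth_on U (ext a f) \<and> (\<forall>v\<in>M a. ext a f v = f v)"
proof -
  have "smooth_ext a f (ext a f)" using assms unfolding smooth_fun_def ext_def by (rule someI_ex)
  then show ?thesis by (simp add: smooth_ext_def)
qed

lemma ext_eq: "smooth_fun a f \<Longrightarrow> v \<in> M a \<Longrightarrow> ext a f v = f v"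
  using smooth_ext_props by blast

lemma smooth_C1: "smooth_on U g \<Longrightarrow> continuous_on U g \<and> (\<forall>x\<in>U. g differentiable (at x))"
  unfolding smooth_on_def by (metis Ck_on.simps(2))

lemma ext_diff: "smooth_fun a f \<Longrightarrow> v \<in> M a \<Longrightarrow> ext a f differentiable (at v)"
  using smooth_ext_props smooth_C1 by blast

lemma ext_cont: "smooth_fun a f \<Longrightarrow> v \<in> M a \<Longrightarrow> continuous (at v) (ext a f)"
  using ext_diff differentiable_imp_continuous_within by blast

definition JJ :: "real \<Rightarrow> real \<Rightarrow> R4 \<Rightarrow> R4" where
  "JJ p q v = p *\<^sub>R dxi v + q *\<^sub>R dmu v"

lemma JJ_simp: "JJ p q (x,y,z,w) = (-p*y, p*x, -q*w, q*z)"
  by (simp add: JJ_def dxi_def dmu_def)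

lemma JJ_linear: "linear (JJ p q)"
  by (rule linearI) (auto simp: JJ_def dxi_def dmu_def split: prod.splits simp: algebra_simps)

lemma JJ_self: "JJ p q u \<bullet> u = 0"
  by (cases u) (auto simp: JJ_simp algebra_simps)

lemma JJ_skew: "JJ p q u \<bullet> w = - (JJ p q w \<bullet> u)"
  by (cases u; cases w) (auto simp: JJ_simp algebra_simps)

lemma JJ_tangent: "JJ p q v \<in> tangent a v"
  by (cases v) (auto simp: JJ_simp tangent_def normal_def algebra_simps)

lemma normal_pos: "a > 0 \<Longrightarrow> v \<in> M a \<Longrightarrow> normal a v \<bullet> normal a v > 0"
proof -
  assume a: "a > 0" and v: "v \<in> M a"
  obtain x y z w where vv: "v = (x,y,z,w)" by (cases v) auto
  have h: "x^2+y^2 = a^2*(1-z^2-w^2)" using v vv M_mem by auto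
  have "normal a v \<bullet> normal a v = x^2+y^2+(a^2*z)^2+(a^2*w)^2"
    by (simp add: vv normal_simp power2_eq_square)
  moreover have "x^2+y^2+(a^2*z)^2+(a^2*w)^2 > 0"
  proof (cases "x^2+y^2 > 0")
    case True then show ?thesis by (smt (verit) zero_le_power2)
  next
    case False
    then have x0: "x^2+y^2 = 0" by (smt (verit) zero_le_power2)
    then have "z^2+w^2 = 1" using h a by simp
    moreover have "(a^2*z)^2+(a^2*w)^2 = a^4*(z^2+w^2)" by (simp add: power_mult_distrib algebra_simps)
    ultimately show ?thesis using a x0 by simp
  qed
  ultimately show ?thesis by simp
qed

lemma proj_tangent: "a > 0 \<Longrightarrow> v \<in> M a \<Longrightarrow> proj a v u \<in> tangent a v"
  using normal_pos[of a v]
  by (simp add: proj_def tangent_def inner_diff_left)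

lemma proj_inner: "w \<in> tangent a v \<Longrightarrow> proj a v u \<bullet> w = u \<bullet> w"
proof -
  assume "w \<in> tangent a v"
  then have "normal a v \<bullet> w = 0" by (simp add: tangent_def inner_commute)
  then show ?thesis by (simp add: proj_def inner_diff_left)
qed

lemma JJ_deriv: "frechet_derivative (JJ p q) (at v) = JJ p q"
  using frechet_derivative_at[OF linear_imp_has_derivative[OF JJ_linear]] by simp

lemma JJ_smooth: "smooth_fun a (JJ p q)"
  unfolding smooth_fun_def smooth_ext_def
  by (rule exI[of _ "JJ p q"], rule exI[of _ UNIV]) (simp add: smooth_linear JJ_linear)

lemma JJ_vf: "vector_field a (JJ p q)"
  by (simp add: vector_field_def JJ_smooth JJ_tangent)

lemma dderiv_JJ: "a > 0 \<Longrightarrow> v \<in> M a \<Longrightarrow> u \<in> tangent a v \<Longrightarrow> dderiv a (JJ p q) v u = JJ p q u"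
proof -
  assume a: "a > 0" and v: "v \<in> M a" and ut: "u \<in> tangent a v"
  have d2: "JJ p q differentiable (at v)"
    using linear_imp_has_derivative[OF JJ_linear] by (auto simp: differentiable_def)
  have "frechet_derivative (ext a (JJ p q)) (at v) u = frechet_derivative (JJ p q) (at v) u"
    by (rule deriv_indep[OF a v ut ext_diff[OF JJ_smooth v] d2]) (simp add: ext_eq[OF JJ_smooth])
  then show ?thesis by (simp add: dderiv_def JJ_deriv)
qed

lemma JJ_killing:
  assumes a: "a > 0" shows "killing a (JJ p q)"
proof -
  have "nabla a V (JJ p q) v \<bullet> W v = - (nabla a W (JJ p q) v \<bullet> V v)"
    if vw: "vector_field a V" "vector_field a W" and v: "v \<in> M a" for V W v
  proof -
    have Vt: "V v \<in> tangent a v" and Wt: "W v \<in> tangent a v" using vw v by (auto simp: vector_field_def)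
    have "nabla a V (JJ p q) v \<bullet> W v = JJ p q (V v) \<bullet> W v"
      unfolding nabla_def by (simp add: proj_inner[OF Wt] dderiv_JJ[OF a v Vt])
    moreover have "nabla a W (JJ p q) v \<bullet> V v = JJ p q (W v) \<bullet> V v"
      unfolding nabla_def by (simp add: proj_inner[OF Vt] dderiv_JJ[OF a v Wt])
    ultimately show ?thesis using JJ_skew[of p q "V v" "W v"] by simp
  qed
  then show ?thesis unfolding killing_def using JJ_vf by blast
qed

definition rot :: "real \<Rightarrow> real \<Rightarrow> real \<Rightarrow> R4 \<Rightarrow> R4" where
  "rot p q t v = (cos(p*t)* fst v - sin(p*t)* fst(snd v), sin(p*t)* fst v + cos(p*t)* fst(snd v),
                  cos(q*t)* fst(snd(snd v)) - sin(q*t)* snd(snd(snd v)),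
                  sin(q*t)* fst(snd(snd v)) + cos(q*t)* snd(snd(snd v)))"

lemma rot_simp: "rot p q t (x,y,z,w) = (cos(p*t)*x - sin(p*t)*y, sin(p*t)*x + cos(p*t)*y,
                  cos(q*t)*z - sin(q*t)*w, sin(q*t)*z + cos(q*t)*w)"
  by (simp add: rot_def)

lemma rot_add: "rot p q t (u + w) = rot p q t u + rot p q t w"
  by (cases u; cases w) (simp add: rot_simp algebra_simps)

lemma rot_scale: "rot p q t (c *\<^sub>R u) = c *\<^sub>R rot p q t u"
  by (cases u) (simp add: rot_simp algebra_simps)

lemma rot_Psi_deriv:
  "((\<lambda>x. rot p q (fst x) (snd x)) has_derivative
     (\<lambda>d. fst d *\<^sub>R rot p q (fst x) (JJ p q (snd x)) + rot p q (fst x) (snd d))) (at x)"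
  unfolding rot_def
  apply (rule has_derivative_eq_rhs)
   apply (rule derivative_eq_intros refl)+
  apply (cases x)
  apply (auto simp: fun_eq_iff JJ_def dxi_def dmu_def split: prod.splits)
  apply (simp_all add: algebra_simps)
  done

lemma rot_F_deriv:
  fixes L :: "R4 \<Rightarrow> R4" and x :: "real \<times> R4"
  assumes L: "linear L"
  shows "((\<lambda>x. rot p q (fst x) (L (snd x) + c)) has_derivative
     (\<lambda>d. fst d *\<^sub>R rot p q (fst x) (JJ p q (L (snd x) + c)) + rot p q (fst x) (L (snd d)))) (at x)"
proof -
  have bl: "bounded_linear L" using L by (simp add: linear_conv_bounded_linear)
  have g: "((\<lambda>x::real\<times>R4. (fst x, L (snd x) + c)) has_derivative (\<lambda>d. (fst d, L (snd d)))) (at x)"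
    by (intro has_derivative_Pair has_derivative_fst has_derivative_ident has_derivative_add_const
        bounded_linear.has_derivative[OF bl] has_derivative_snd)
  have "((\<lambda>x. rot p q (fst x) (snd x)) \<circ> (\<lambda>x. (fst x, L (snd x) + c)) has_derivative
     (\<lambda>d. fst d *\<^sub>R rot p q (fst x) (JJ p q (L (snd x) + c)) + rot p q (fst x) (snd d)) \<circ> (\<lambda>d. (fst d, L (snd d)))) (at x)"
    using diff_chain_at[OF g rot_Psi_deriv[of p q "(fst x, L (snd x) + c)"]] by simp
  then show ?thesis by (simp add: o_def)
qed

lemma Ck_rot:
  fixes L :: "R4 \<Rightarrow> R4" and U :: "(real \<times> R4) set"
  assumes "linear L"
  shows "Ck_on k U (\<lambda>x. rot p q (fst x) (L (snd x) + c))"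
  using assms
proof (induction k arbitrary: L c)
  case 0
  have "continuous_on U (\<lambda>x. rot p q (fst x) (L (snd x) + c))"
    by (intro continuous_at_imp_continuous_on ballI has_derivative_continuous[OF rot_F_deriv[OF 0]])
  then show ?case by simp
next
  case (Suc k)
  have hd: "\<And>x. ((\<lambda>x. rot p q (fst x) (L (snd x) + c)) has_derivative
     (\<lambda>d. fst d *\<^sub>R rot p q (fst x) (JJ p q (L (snd x) + c)) + rot p q (fst x) (L (snd d)))) (at x)"
    using rot_F_deriv[OF Suc.prems] .
  have cont: "continuous_on U (\<lambda>x. rot p q (fst x) (L (snd x) + c))"
    by (intro continuous_at_imp_continuous_on ballI has_derivative_continuous[OF hd])
  have diff: "\<forall>x\<in>U. (\<lambda>x. rot p q (fst x) (L (snd x) + c)) differentiable (at x)"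
    using hd unfolding differentiable_def by blast
  have "Ck_on k U (\<lambda>x. frechet_derivative (\<lambda>x. rot p q (fst x) (L (snd x) + c)) (at x) b)" for b
  proof -
    define L' where "L' v = fst b *\<^sub>R JJ p q (L v)" for v
    define c' where "c' = fst b *\<^sub>R JJ p q c + L (snd b)"
    have lL': "linear L'" unfolding L'_def
      using linear_compose[OF Suc.prems JJ_linear] by (auto simp: linear_iff o_def scaleR_add_right)
    have "frechet_derivative (\<lambda>x. rot p q (fst x) (L (snd x) + c)) (at x) b = rot p q (fst x) (L' (snd x) + c')" for x
    proof -
      have "frechet_derivative (\<lambda>x. rot p q (fst x) (L (snd x) + c)) (at x) b =
         fst b *\<^sub>R rot p q (fst x) (JJ p q (L (snd x) + c)) + rot p q (fst x) (L (snd b))"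
        by (simp only: frechet_derivative_at[OF hd[of x], symmetric])
      also have "\<dots> = rot p q (fst x) (L' (snd x) + c')"
        unfolding L'_def c'_def
        by (simp add: rot_add rot_scale linear_add[OF JJ_linear] algebra_simps)
      finally show ?thesis .
    qed
    then show ?thesis using Suc.IH[OF lL', of c'] by simp
  qed
  then show ?case using cont diff by simp
qed

lemma rot_smooth: "smooth_on (U :: (real \<times> R4) set) (\<lambda>(t,v). rot p q t v)"
proof -
  have "Ck_on k U (\<lambda>x. rot p q (fst x) (id (snd x) + 0))" for k
    by (rule Ck_rot) (auto intro: linearI)
  then have "Ck_on k U (\<lambda>x. rot p q (fst x) (snd x))" for k by simp
  then show ?thesis unfolding smooth_on_def case_prod_unfold by blast
qed

lemma rot_M: "v \<in> M a \<Longrightarrow> rot p q t v \<in> M a"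
proof -
  assume v: "v \<in> M a"
  obtain x y z w where vv: "v = (x,y,z,w)" by (cases v) auto
  have h: "x^2+y^2 = a^2*(1-z^2-w^2)" using v vv M_mem by auto
  have e1: "(cos(p*t)*x - sin(p*t)*y)^2 + (sin(p*t)*x + cos(p*t)*y)^2 = ((sin(p*t))^2 + (cos(p*t))^2)*(x^2+y^2)"
    by algebra
  have e2: "(cos(q*t)*z - sin(q*t)*w)^2 + (sin(q*t)*z + cos(q*t)*w)^2 = ((sin(q*t))^2 + (cos(q*t))^2)*(z^2+w^2)"
    by algebra
  have "(cos(p*t)*x - sin(p*t)*y)^2 + (sin(p*t)*x + cos(p*t)*y)^2 =
        a^2*(1 - (cos(q*t)*z - sin(q*t)*w)^2 - (sin(q*t)*z + cos(q*t)*w)^2)"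
    using e1 e2 h by (simp add: algebra_simps)
  then show ?thesis by (simp add: vv rot_simp M_mem)
qed

lemma rot_0: "rot p q 0 v = v"
  by (cases v) (simp add: rot_simp)

lemma rc1: "cos((a::real)+b)*x - sin(a+b)*y = cos a*(cos b*x - sin b*y) - sin a*(sin b*x + cos b*y)"
  unfolding cos_add sin_add by (simp add: algebra_simps)
lemma rc2: "sin((a::real)+b)*x + cos(a+b)*y = sin a*(cos b*x - sin b*y) + cos a*(sin b*x + cos b*y)"
  unfolding cos_add sin_add by (simp add: algebra_simps)

lemma rot_comp: "rot p q (s+t) v = rot p q s (rot p q t v)"
  by (cases v) (simp only: rot_simp distrib_left rc1 rc2)

lemma rot_period: "cos(p*T) = 1 \<Longrightarrow> sin(p*T) = 0 \<Longrightarrow> cos(q*T) = 1 \<Longrightarrow> sin(q*T) = 0 \<Longrightarrow> rot p q T v = v"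
  by (cases v) (simp add: rot_simp)

lemma rot_vd: "((\<lambda>t. rot p q t v) has_vector_derivative JJ p q v) (at 0)"
proof -
  have g: "((\<lambda>t::real. (t, v)) has_derivative (\<lambda>h. (h, 0))) (at 0)"
    by (intro has_derivative_Pair has_derivative_ident has_derivative_const)
  have "((\<lambda>x. rot p q (fst x) (snd x)) \<circ> (\<lambda>t. (t, v)) has_derivative
       (\<lambda>d. fst d *\<^sub>R rot p q 0 (JJ p q v) + rot p q 0 (snd d)) \<circ> (\<lambda>h. (h, 0))) (at 0)"
    using diff_chain_at[OF g rot_Psi_deriv[of p q "(0, v)"]] by simp
  then show ?thesis by (simp add: o_def rot_0 has_vector_derivative_def)
qed

lemma trig_int: "(x::real) = 2*pi* of_int (n::int) \<Longrightarrow> cos x = 1 \<and> sin x = 0"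
  using cos_int_2pin sin_int_2pin by simp

lemma period_exists:
  fixes p q :: real
  assumes "p \<noteq> 0 \<or> q \<noteq> 0" "p = 0 \<or> q / p \<in> \<rat>"
  shows "\<exists>T>0. cos(p*T) = 1 \<and> sin(p*T) = 0 \<and> cos(q*T) = 1 \<and> sin(q*T) = 0"
proof (cases "p = 0")
  case True
  then have q: "q \<noteq> 0" using assms by simp
  define s :: int where "s = (if q > 0 then 1 else -1)"
  have qs: "q / \<bar>q\<bar> = of_int s" using q by (auto simp: s_def)
  define T where "T = 2*pi/\<bar>q\<bar>"
  have "q*T = 2*pi* of_int s" using q qs unfolding T_def by (simp add: field_simps)
  moreover have "T > 0" using q by (simp add: T_def)
  ultimately show ?thesis using True trig_int by auto
next
  case False
  then have "q / p \<in> \<rat>" using assms by simp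
  then obtain m n :: int where n: "n > 0" and mn: "q / p = of_int m / of_int n"
    by (rule Rats_cases') blast
  define s :: int where "s = (if p > 0 then 1 else -1)"
  have ps: "p / \<bar>p\<bar> = of_int s" using False by (auto simp: s_def)
  define T where "T = 2*pi* of_int n/\<bar>p\<bar>"
  have pT: "p*T = 2*pi* of_int (s*n)" using False ps unfolding T_def
    by (simp add: field_simps)
  have "q = p * (of_int m / of_int n)" using mn False by (simp add: field_simps)
  then have "q*T = (p*T) * of_int m / of_int n" by simp
  also have "\<dots> = 2*pi* of_int (s*m)" using n unfolding pT by (simp add: field_simps)
  finally have "q*T = 2*pi* of_int (s*m)" .
  moreover have "T > 0" using False n by (simp add: T_def)
  ultimately show ?thesis using pT trig_int by blast
qed

lemma S1_gen_JJ:
  fixes p q :: real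
  assumes "p \<noteq> 0 \<or> q \<noteq> 0" "p = 0 \<or> q / p \<in> \<rat>"
  shows "S1_generator a (JJ p q)"
proof -
  obtain T where T: "T > 0" "cos(p*T) = 1" "sin(p*T) = 0" "cos(q*T) = 1" "sin(q*T) = 0"
    using period_exists[OF assms] by blast
  show ?thesis unfolding S1_generator_def
    apply (rule exI[of _ "rot p q"], rule exI[of _ T])
    using T rot_smooth[of UNIV p q] rot_M rot_0 rot_comp rot_period rot_vd
    by auto
qed

lemma proj_linear: "linear (proj a v)"
  by (rule linearI) (simp_all add: proj_def inner_add_left algebra_simps add_divide_distrib scaleR_add_left)

lemma proj_tan_id: "w \<in> tangent a v \<Longrightarrow> proj a v w = w"
  by (simp add: proj_def tangent_def)

lemma div_fJ:
  assumes a: "a > 0" and f: "smooth_fun a f" and Z: "smooth_fun a Z"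
    and Zeq: "\<forall>w\<in>M a. Z w = f w *\<^sub>R JJ p q w" and v: "v \<in> M a"
  shows "divergence a Z v = frechet_derivative (ext a f) (at v) (JJ p q v)"
proof -
  define Df where "Df = frechet_derivative (ext a f) (at v)"
  have hf: "(ext a f has_derivative Df) (at v)"
    using ext_diff[OF f v] frechet_derivative_works Df_def by blast
  have lD: "linear Df" using hf has_derivative_linear by blast
  define G where "G w = ext a f w *\<^sub>R JJ p q w" for w
  have hG: "(G has_derivative (\<lambda>h. ext a f v *\<^sub>R JJ p q h + Df h *\<^sub>R JJ p q v)) (at v)"
    unfolding G_def[abs_def]
    by (rule has_derivative_scaleR[OF hf linear_imp_has_derivative[OF JJ_linear]])
  have dG: "G differentiable (at v)" using hG by (auto simp: differentiable_def)
  have dd: "dderiv a Z v u = Df u *\<^sub>R JJ p q v + f v *\<^sub>R JJ p q u" if ut: "u \<in> tangent a v" for u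
  proof -
    have "dderiv a Z v u = frechet_derivative G (at v) u"
      unfolding dderiv_def
      by (rule deriv_indep[OF a v ut ext_diff[OF Z v] dG]) (simp add: G_def ext_eq[OF Z] ext_eq[OF f] Zeq)
    also have "\<dots> = ext a f v *\<^sub>R JJ p q u + Df u *\<^sub>R JJ p q v"
      by (simp only: frechet_derivative_at[OF hG, symmetric])
    finally show ?thesis using ext_eq[OF f v] by simp
  qed
  have "divergence a Z v = (\<Sum>b\<in>Basis. Df ((b \<bullet> JJ p q v) *\<^sub>R proj a v b))"
    unfolding divergence_def
  proof (rule sum.cong[OF refl])
    fix b :: R4
    have t: "proj a v b \<in> tangent a v" using proj_tangent[OF a v] .
    have "JJ p q v \<bullet> proj a v b = b \<bullet> JJ p q v"
      using proj_inner[OF JJ_tangent] by (simp add: inner_commute)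
    then show "dderiv a Z v (proj a v b) \<bullet> proj a v b = Df ((b \<bullet> JJ p q v) *\<^sub>R proj a v b)"
      using dd[OF t] by (simp add: inner_add_left JJ_self linear_scale[OF lD])
  qed
  also have "\<dots> = Df (\<Sum>b\<in>Basis. (b \<bullet> JJ p q v) *\<^sub>R proj a v b)"
    by (simp add: linear_sum[OF lD])
  also have "(\<Sum>b\<in>Basis. (b \<bullet> JJ p q v) *\<^sub>R proj a v b) = proj a v (\<Sum>b\<in>Basis. (b \<bullet> JJ p q v) *\<^sub>R b)"
    by (simp add: linear_sum[OF proj_linear] linear_scale[OF proj_linear])
  also have "\<dots> = JJ p q v"
    using euclidean_representation[of "JJ p q v"] proj_tan_id[OF JJ_tangent]
    by (simp add: inner_commute)
  finally show ?thesis by (simp add: Df_def)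
qed

lemma comp_deriv:
  fixes \<gamma> :: "real \<Rightarrow> R4"
  assumes "(\<gamma> has_vector_derivative V) F"
  shows "((\<lambda>t. fst (\<gamma> t)) has_real_derivative fst V) F"
    "((\<lambda>t. fst (snd (\<gamma> t))) has_real_derivative fst (snd V)) F"
    "((\<lambda>t. fst (snd (snd (\<gamma> t)))) has_real_derivative fst (snd (snd V))) F"
    "((\<lambda>t. snd (snd (snd (\<gamma> t)))) has_real_derivative snd (snd (snd V))) F"
proof -
  have b2: "bounded_linear (\<lambda>v::R4. fst (snd v))"
    using bounded_linear_compose[OF bounded_linear_fst bounded_linear_snd] by (simp add: o_def)
  have b3: "bounded_linear (\<lambda>v::R4. fst (snd (snd v)))"
    using bounded_linear_compose[OF bounded_linear_fst bounded_linear_compose[OF bounded_linear_snd bounded_linear_snd]] by (simp add: o_def)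
  have b4: "bounded_linear (\<lambda>v::R4. snd (snd (snd v)))"
    using bounded_linear_compose[OF bounded_linear_snd bounded_linear_compose[OF bounded_linear_snd bounded_linear_snd]] by (simp add: o_def)
  show "((\<lambda>t. fst (\<gamma> t)) has_real_derivative fst V) F"
    using bounded_linear.has_vector_derivative[OF bounded_linear_fst assms]
    by (simp add: has_real_derivative_iff_has_vector_derivative)
  show "((\<lambda>t. fst (snd (\<gamma> t))) has_real_derivative fst (snd V)) F"
    using bounded_linear.has_vector_derivative[OF b2 assms]
    by (simp add: has_real_derivative_iff_has_vector_derivative)
  show "((\<lambda>t. fst (snd (snd (\<gamma> t)))) has_real_derivative fst (snd (snd V))) F"
    using bounded_linear.has_vector_derivative[OF b3 assms]
    by (simp add: has_real_derivative_iff_has_vector_derivative)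
  show "((\<lambda>t. snd (snd (snd (\<gamma> t)))) has_real_derivative snd (snd (snd V))) F"
    using bounded_linear.has_vector_derivative[OF b4 assms]
    by (simp add: has_real_derivative_iff_has_vector_derivative)
qed

lemma const_lemma:
  fixes g d :: "real \<Rightarrow> real"
  assumes g0: "g 0 \<noteq> 0" and gd: "\<And>t. (g has_real_derivative d t) (at t)"
    and dz: "\<And>t. g t \<noteq> 0 \<Longrightarrow> d t = 0" and t0: "t0 \<ge> 0"
  shows "g t0 = g 0"
proof -
  have cont: "continuous_on S g" for S
    using gd by (intro continuous_at_imp_continuous_on ballI DERIV_isCont) blast
  have nz: "\<forall>t\<in>{0..t0}. g t \<noteq> 0"
  proof (rule ccontr)
    assume neg: "\<not> (\<forall>t\<in>{0..t0}. g t \<noteq> 0)"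
    define S where "S = {t \<in> {0..t0}. g t = 0}"
    have Sne: "S \<noteq> {}" using neg S_def by auto
    have Scl: "closed S" unfolding S_def by (rule continuous_closed_preimage_constant[OF cont]) simp
    have Sbd: "bdd_below S" unfolding S_def by (rule bdd_belowI[of _ 0]) auto
    define t1 where "t1 = Inf S"
    have t1S: "t1 \<in> S" using closed_contains_Inf[OF Sne Sbd Scl] t1_def by simp
    then have gt1: "g t1 = 0" and t1r: "0 \<le> t1" "t1 \<le> t0" by (auto simp: S_def)
    have t1pos: "t1 > 0" using gt1 g0 t1r by (cases "t1 = 0") auto
    have before: "g x \<noteq> 0" if "0 \<le> x" "x < t1" for x
    proof
      assume "g x = 0"
      then have "x \<in> S" using that t1r by (auto simp: S_def)
      then have "t1 \<le> x" unfolding t1_def using Sbd by (rule cInf_lower)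
      then show False using that by simp
    qed
    have "g t1 = g 0"
    proof (rule DERIV_isconst_end[OF t1pos cont])
      fix x assume "0 < x" "x < t1"
      then have "d x = 0" using before dz by simp
      then show "(g has_real_derivative 0) (at x)" using gd[of x] by simp
    qed
    then show False using gt1 g0 by simp
  qed
  show ?thesis
  proof (cases "t0 = 0")
    case True then show ?thesis by simp
  next
    case False
    then have "t0 > 0" using t0 by simp
    then show ?thesis
    proof (rule DERIV_isconst_end[OF _ cont])
      fix x assume "0 < x" "x < t0"
      then have "d x = 0" using nz dz by simp
      then show "(g has_real_derivative 0) (at x)" using gd[of x] by simp
    qed
  qed
qed

lemma ev_pick:
  fixes c :: "real \<Rightarrow> R4"
  assumes f: "smooth_fun a f" and v: "v \<in> M a" and fv: "f v \<noteq> 0"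
    and c: "isCont c 0" and c0: "c 0 = v"
  shows "\<exists>d>0. \<forall>e. e \<noteq> 0 \<and> \<bar>e\<bar> < d \<longrightarrow> ext a f (c e) \<noteq> 0"
proof -
  have "isCont (ext a f) (c 0)" using ext_cont[OF f v] c0 by simp
  then have "isCont (\<lambda>e. ext a f (c e)) 0" using c by (rule isCont_o2[rotated])
  then have "((\<lambda>e. ext a f (c e)) \<longlongrightarrow> ext a f v) (at 0)" using c0 by (simp add: isCont_def)
  moreover have "ext a f v \<noteq> 0" using ext_eq[OF f v] fv by simp
  ultimately have "\<forall>\<^sub>F e in at 0. ext a f (c e) \<noteq> 0" using tendsto_imp_eventually_ne by blast
  then have "\<exists>d>0. \<forall>x\<in>UNIV. x \<noteq> 0 \<and> dist x 0 < d \<longrightarrow> ext a f (c x) \<noteq> 0"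
    by (simp only: eventually_at)
  then show ?thesis by (simp add: dist_real_def)
qed

lemma perturb:
  assumes a: "a > 0" and f: "smooth_fun a f" and v: "v \<in> M a" and fv: "f v \<noteq> 0"
  shows "\<exists>v0\<in>M a. f v0 \<noteq> 0 \<and> (fst v0 \<noteq> 0 \<or> fst (snd v0) \<noteq> 0) \<and>
           (fst (snd (snd v0)) \<noteq> 0 \<or> snd (snd (snd v0)) \<noteq> 0)"
proof -
  obtain x y z w where vv: "v = (x,y,z,w)" by (cases v) auto
  have h: "x^2+y^2 = a^2*(1-z^2-w^2)" using v vv M_mem by auto
  show ?thesis
  proof (cases "(x \<noteq> 0 \<or> y \<noteq> 0) \<and> (z \<noteq> 0 \<or> w \<noteq> 0)")
    case True then show ?thesis using v fv vv by (intro bexI[of _ v]) auto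
  next
    case False
    then consider "z = 0 \<and> w = 0" | "x = 0 \<and> y = 0" by blast
    then show ?thesis
    proof cases
      case 1
      then have xy: "x^2+y^2 = a^2" using h by simp
      then have xy0: "x \<noteq> 0 \<or> y \<noteq> 0" using a by auto
      define c where "c e = (sqrt(1-e^2)*x, sqrt(1-e^2)*y, e, 0::real)" for e :: real
      have cc: "isCont c 0" unfolding c_def by (intro continuous_intros)
      have c0: "c 0 = v" using 1 vv by (simp add: c_def)
      obtain d where d: "d > 0" "\<forall>e. e \<noteq> 0 \<and> \<bar>e\<bar> < d \<longrightarrow> ext a f (c e) \<noteq> 0"
        using ev_pick[OF f v fv cc c0] by blast
      define e where "e = min (d/2) (1/2)"
      have e: "e > 0" "e < d" "e < 1" using d by (auto simp: e_def)
      have e2: "1 - e^2 > 0" using e by (simp add: power_less_one_iff abs_square_less_1)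
      have cM: "c e \<in> M a"
      proof -
        have "(sqrt(1-e^2)*x)^2 + (sqrt(1-e^2)*y)^2 = (1-e^2)*(x^2+y^2)"
          using e2 by (simp add: power_mult_distrib algebra_simps)
        then show ?thesis using xy by (simp add: c_def M_mem algebra_simps)
      qed
      have "ext a f (c e) \<noteq> 0" using d e by auto
      then have "f (c e) \<noteq> 0" using ext_eq[OF f cM] by simp
      moreover have "sqrt(1-e^2) \<noteq> 0" using e2 by simp
      ultimately show ?thesis using cM xy0 e by (intro bexI[of _ "c e"]) (auto simp: c_def)
    next
      case 2
      then have zw: "z^2+w^2 = 1" using h a by simp
      then have zw0: "z \<noteq> 0 \<or> w \<noteq> 0" by auto
      define c where "c e = (a*e, 0::real, sqrt(1-e^2)*z, sqrt(1-e^2)*w)" for e :: real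
      have cc: "isCont c 0" unfolding c_def by (intro continuous_intros)
      have c0: "c 0 = v" using 2 vv by (simp add: c_def)
      obtain d where d: "d > 0" "\<forall>e. e \<noteq> 0 \<and> \<bar>e\<bar> < d \<longrightarrow> ext a f (c e) \<noteq> 0"
        using ev_pick[OF f v fv cc c0] by blast
      define e where "e = min (d/2) (1/2)"
      have e: "e > 0" "e < d" "e < 1" using d by (auto simp: e_def)
      have e2: "1 - e^2 > 0" using e by (simp add: power_less_one_iff abs_square_less_1)
      have cM: "c e \<in> M a"
      proof -
        have "(sqrt(1-e^2)*z)^2 + (sqrt(1-e^2)*w)^2 = (1-e^2)*(z^2+w^2)"
          using e2 by (simp add: power_mult_distrib algebra_simps)
        then have E: "1 - (sqrt(1-e^2)*z)^2 - (sqrt(1-e^2)*w)^2 = e^2" using zw by simp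
        show ?thesis unfolding c_def M_mem E by (simp add: power_mult_distrib)
      qed
      have "ext a f (c e) \<noteq> 0" using d e by auto
      then have "f (c e) \<noteq> 0" using ext_eq[OF f cM] by simp
      moreover have "sqrt(1-e^2) \<noteq> 0" using e2 by simp
      ultimately show ?thesis using cM zw0 e a by (intro bexI[of _ "c e"]) (auto simp: c_def)
    qed
  qed
qed

lemma JJ_comps: "fst (JJ p q v) = -p * fst (snd v)" "fst (snd (JJ p q v)) = p * fst v"
  "fst (snd (snd (JJ p q v))) = -q * snd (snd (snd v))" "snd (snd (snd (JJ p q v))) = q * fst (snd (snd v))"
  by (cases v; simp add: JJ_simp)+

lemma JJ_ne: "a > 0 \<Longrightarrow> p \<noteq> 0 \<Longrightarrow> q \<noteq> 0 \<Longrightarrow> w \<in> M a \<Longrightarrow> JJ p q w \<noteq> 0"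
proof
  assume a: "a > 0" and p: "p \<noteq> 0" and q: "q \<noteq> 0" and w: "w \<in> M a" and J: "JJ p q w = 0"
  obtain x y z u where ww: "w = (x,y,z,u)" by (cases w) auto
  have "x = 0" "y = 0" "z = 0" "u = 0" using J p q by (auto simp: ww JJ_simp zero_prod_def)
  then show False using w a ww by (simp add: M_mem)
qed

lemma rot_recover:
  fixes x0 y0 c s :: real
  assumes "x0 * c + y0 * s = x0" "- x0 * s + y0 * c = y0" "x0 \<noteq> 0 \<or> y0 \<noteq> 0"
  shows "c = 1"
proof -
  have "(c - 1) * (x0^2 + y0^2) = x0*(x0 * c + y0 * s - x0) + y0*(- x0 * s + y0 * c - y0)"
    by (simp add: algebra_simps power2_eq_square)
  then have "(c - 1) * (x0^2 + y0^2) = 0" using assms(1,2) by simp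
  then show ?thesis using assms(3) by auto
qed

lemma only_if:
  fixes p q :: real and f f' :: "R4 \<Rightarrow> real" and X :: "R4 \<Rightarrow> R4"
  assumes a: "a > 0" and p: "p \<noteq> 0" and q: "q \<noteq> 0"
    and f: "smooth_fun a f" and f': "smooth_fun a f'"
    and dJ: "\<forall>w\<in>M a. frechet_derivative (ext a f) (at w) (JJ p q w) = 0"
    and eq: "\<forall>w\<in>M a. f w *\<^sub>R JJ p q w = f' w *\<^sub>R X w"
    and S1: "S1_generator a X"
    and v0M: "v0 \<in> M a" and fv0: "f v0 \<noteq> 0"
    and xy0: "fst v0 \<noteq> 0 \<or> fst (snd v0) \<noteq> 0"
    and zw0: "fst (snd (snd v0)) \<noteq> 0 \<or> snd (snd (snd v0)) \<noteq> 0"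
  shows "q / p \<in> \<rat>"
proof -
  obtain \<Phi> :: "real \<Rightarrow> R4 \<Rightarrow> R4" and T where T: "T > 0"
    and \<Phi>M: "\<forall>t. \<forall>v\<in>M a. \<Phi> t v \<in> M a"
    and \<Phi>0: "\<forall>v\<in>M a. \<Phi> 0 v = v"
    and grp: "\<forall>s t. \<forall>v\<in>M a. \<Phi> (s + t) v = \<Phi> s (\<Phi> t v)"
    and per: "\<forall>v\<in>M a. \<Phi> T v = v"
    and der: "\<forall>v\<in>M a. ((\<lambda>t. \<Phi> t v) has_vector_derivative X v) (at 0)"
    using S1 unfolding S1_generator_def by blast
  define \<gamma> where "\<gamma> t = \<Phi> t v0" for t
  have \<gamma>M: "\<gamma> t \<in> M a" for t using \<Phi>M v0M by (simp add: \<gamma>_def)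
  have \<gamma>0: "\<gamma> 0 = v0" using \<Phi>0 v0M by (simp add: \<gamma>_def)
  have \<gamma>T: "\<gamma> T = v0" using per v0M by (simp add: \<gamma>_def)
  have \<gamma>d: "(\<gamma> has_vector_derivative X (\<gamma> t)) (at t)" for t
  proof -
    define w where "w = \<gamma> t"
    have wM: "w \<in> M a" using \<gamma>M w_def by simp
    have d1: "((\<lambda>s. s - t) has_vector_derivative 1) (at t)"
      by (auto intro!: derivative_eq_intros simp: has_real_derivative_iff_has_vector_derivative[symmetric])
    have d2: "((\<lambda>s. \<Phi> s w) has_vector_derivative X w) (at ((\<lambda>s. s - t) t))"
      using der wM by simp
    have "((\<lambda>s. \<Phi> s w) \<circ> (\<lambda>s. s - t) has_vector_derivative 1 *\<^sub>R X w) (at t)"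
      by (rule vector_diff_chain_at[OF d1 d2])
    moreover have "(\<lambda>s. \<Phi> s w) \<circ> (\<lambda>s. s - t) = \<gamma>"
    proof
      fix s
      have "\<Phi> (s - t) (\<Phi> t v0) = \<Phi> ((s - t) + t) v0" using grp v0M by metis
      then show "((\<lambda>s. \<Phi> s w) \<circ> (\<lambda>s. s - t)) s = \<gamma> s" by (simp add: w_def \<gamma>_def)
    qed
    ultimately show ?thesis by (simp add: w_def)
  qed
  have \<gamma>cont: "continuous_on S \<gamma>" for S
    using \<gamma>d by (intro continuous_at_imp_continuous_on ballI has_vector_derivative_continuous) blast
  have Xform: "f' w \<noteq> 0 \<and> X w = (f w / f' w) *\<^sub>R JJ p q w" if wM: "w \<in> M a" and fw: "f w \<noteq> 0" for w
  proof -
    have "f w *\<^sub>R JJ p q w \<noteq> 0" using fw JJ_ne[OF a p q wM] by simp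
    then have f'w: "f' w \<noteq> 0" using eq wM by auto
    have "X w = (1 / f' w) *\<^sub>R (f' w *\<^sub>R X w)" using f'w by simp
    also have "\<dots> = (f w / f' w) *\<^sub>R JJ p q w"
    proof -
      have e: "f' w *\<^sub>R X w = f w *\<^sub>R JJ p q w" using eq wM by simp
      show ?thesis unfolding e by simp
    qed
    finally show ?thesis using f'w by simp
  qed
  define g where "g t = ext a f (\<gamma> t)" for t
  define D where "D t = frechet_derivative (ext a f) (at (\<gamma> t)) (X (\<gamma> t))" for t
  have gd: "(g has_real_derivative D t) (at t)" for t
    unfolding g_def D_def has_real_derivative_iff_has_vector_derivative
    by (rule vd_chain[OF \<gamma>d ext_diff[OF f \<gamma>M]])
  have geq: "g t = f (\<gamma> t)" for t using ext_eq[OF f \<gamma>M] g_def by simp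
  have dz: "D t = 0" if "g t \<noteq> 0" for t
  proof -
    have fw: "f (\<gamma> t) \<noteq> 0" using that geq by simp
    have lin: "linear (frechet_derivative (ext a f) (at (\<gamma> t)))"
      using ext_diff[OF f \<gamma>M] frechet_derivative_works has_derivative_linear by blast
    have "D t = (f (\<gamma> t) / f' (\<gamma> t)) * frechet_derivative (ext a f) (at (\<gamma> t)) (JJ p q (\<gamma> t))"
      unfolding D_def using Xform[OF \<gamma>M fw] linear_scale[OF lin] by simp
    then show ?thesis using dJ \<gamma>M by simp
  qed
  have g0: "g 0 \<noteq> 0" using geq \<gamma>0 fv0 by simp
  have fconst: "f (\<gamma> t) = f v0" if "t \<ge> 0" for t
    using const_lemma[of g D t, OF g0 gd dz that] geq \<gamma>0 by simp
  define h where "h t = f v0 / f' (\<gamma> t)" for t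
  have Xh: "f' (\<gamma> t) \<noteq> 0 \<and> X (\<gamma> t) = h t *\<^sub>R JJ p q (\<gamma> t)" if "t \<ge> 0" for t
    using Xform[OF \<gamma>M, of t] fconst[OF that] fv0 by (simp add: h_def)
  have hne: "h t \<noteq> 0" if "t \<ge> 0" for t using Xh[OF that] fv0 by (simp add: h_def)
  have f'cont: "continuous_on S (\<lambda>t. f' (\<gamma> t))" for S
  proof -
    have "isCont (\<lambda>t. ext a f' (\<gamma> t)) t" for t
    proof -
      have "isCont \<gamma> t" using \<gamma>d[of t] by (rule has_vector_derivative_continuous)
      moreover have "isCont (ext a f') (\<gamma> t)" using ext_cont[OF f' \<gamma>M] .
      ultimately show ?thesis by (rule isCont_o2)
    qed
    then have "continuous_on S (\<lambda>t. ext a f' (\<gamma> t))"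
      by (intro continuous_at_imp_continuous_on ballI) blast
    then show ?thesis using ext_eq[OF f' \<gamma>M] by simp
  qed
  have hcont: "continuous_on {0..T} h"
    unfolding h_def using Xh by (intro continuous_intros f'cont) auto
  define \<sigma> where "\<sigma> t = integral {0..t} h" for t
  have \<sigma>dw: "(\<sigma> has_real_derivative h t) (at t within {0..T})" if "t \<in> {0..T}" for t
    unfolding \<sigma>_def[abs_def] has_real_derivative_iff_has_vector_derivative
    by (rule integral_has_vector_derivative[OF hcont that])
  have \<sigma>d: "(\<sigma> has_real_derivative h t) (at t)" if "0 < t" "t < T" for t
    using \<sigma>dw[of t] that at_within_Icc_at[OF that] by simp
  have \<sigma>cont: "continuous_on {0..T} \<sigma>"
    unfolding continuous_on_eq_continuous_within
    using \<sigma>dw by (blast intro: DERIV_continuous)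
  have \<sigma>0: "\<sigma> 0 = 0" by (simp add: \<sigma>_def)
  define x1 where "x1 t = fst (\<gamma> t)" for t
  define x2 where "x2 t = fst (snd (\<gamma> t))" for t
  define x3 where "x3 t = fst (snd (snd (\<gamma> t)))" for t
  define x4 where "x4 t = snd (snd (snd (\<gamma> t)))" for t
  have cd: "(x1 has_real_derivative h t * (-p * x2 t)) (at t)"
    "(x2 has_real_derivative h t * (p * x1 t)) (at t)"
    "(x3 has_real_derivative h t * (-q * x4 t)) (at t)"
    "(x4 has_real_derivative h t * (q * x3 t)) (at t)" if "t \<ge> 0" for t
    using comp_deriv[OF \<gamma>d[of t]] Xh[OF that]
    by (simp_all add: x1_def[abs_def] x2_def[abs_def] x3_def[abs_def] x4_def[abs_def] JJ_comps)
  have ccont: "continuous_on S x1" "continuous_on S x2" "continuous_on S x3" "continuous_on S x4" for S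
    unfolding x1_def x2_def x3_def x4_def by (intro continuous_intros \<gamma>cont)+
  have inv: "x 0 * cos (r * \<sigma> T) + y 0 * sin (r * \<sigma> T) = x 0 \<and> - x 0 * sin (r * \<sigma> T) + y 0 * cos (r * \<sigma> T) = y 0"
    if xd: "\<And>t. t \<ge> 0 \<Longrightarrow> (x has_real_derivative h t * (-r * y t)) (at t)"
    and yd: "\<And>t. t \<ge> 0 \<Longrightarrow> (y has_real_derivative h t * (r * x t)) (at t)"
    and xc: "continuous_on {0..T} x" and yc: "continuous_on {0..T} y"
    and xT: "x T = x 0" and yT: "y T = y 0"
    for x y :: "real \<Rightarrow> real" and r :: real
  proof -
    define A where "A t = x t * cos (r * \<sigma> t) + y t * sin (r * \<sigma> t)" for t
    define B where "B t = - x t * sin (r * \<sigma> t) + y t * cos (r * \<sigma> t)" for t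
    have "A T = A 0"
    proof (rule DERIV_isconst_end[OF T])
      show "continuous_on {0..T} A" unfolding A_def by (intro continuous_intros xc yc \<sigma>cont)
      fix t assume t: "0 < t" "t < T"
      show "(A has_real_derivative 0) (at t)" unfolding A_def[abs_def]
        using xd[of t] yd[of t] \<sigma>d[OF t] t
        by (auto intro!: derivative_eq_intros simp: algebra_simps)
    qed
    moreover have "B T = B 0"
    proof (rule DERIV_isconst_end[OF T])
      show "continuous_on {0..T} B" unfolding B_def by (intro continuous_intros xc yc \<sigma>cont)
      fix t assume t: "0 < t" "t < T"
      show "(B has_real_derivative 0) (at t)" unfolding B_def[abs_def]
        using xd[of t] yd[of t] \<sigma>d[OF t] t
        by (auto intro!: derivative_eq_intros simp: algebra_simps)
    qed
    ultimately show ?thesis using xT yT \<sigma>0 by (simp add: A_def B_def)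
  qed
  have x1T: "x1 T = x1 0" "x2 T = x2 0" "x3 T = x3 0" "x4 T = x4 0"
    using \<gamma>T \<gamma>0 by (simp_all add: x1_def x2_def x3_def x4_def)
  note i1 = inv[of x1 p x2, OF cd(1) cd(2) ccont(1) ccont(2) x1T(1) x1T(2)]
  note i2 = inv[of x3 q x4, OF cd(3) cd(4) ccont(3) ccont(4) x1T(3) x1T(4)]
  have c1: "cos (p * \<sigma> T) = 1"
    using rot_recover[OF conjunct1[OF i1] conjunct2[OF i1]] xy0 \<gamma>0 by (simp add: x1_def x2_def)
  have c2: "cos (q * \<sigma> T) = 1"
    using rot_recover[OF conjunct1[OF i2] conjunct2[OF i2]] zw0 \<gamma>0 by (simp add: x3_def x4_def)
  obtain k :: int where k: "p * \<sigma> T = of_int k * 2 * pi" using c1 cos_one_2pi_int by blast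
  obtain m :: int where m: "q * \<sigma> T = of_int m * 2 * pi" using c2 cos_one_2pi_int by blast
  have \<sigma>T: "\<sigma> T \<noteq> 0"
  proof -
    obtain l z where z: "0 < z" "z < T" and lz: "(\<sigma> has_real_derivative l) (at z)"
      and mv: "\<sigma> T - \<sigma> 0 = (T - 0) * l"
      using MVT[OF T \<sigma>cont] \<sigma>d by (metis real_differentiable_def)
    have "l = h z" using DERIV_unique[OF lz \<sigma>d[OF z]] .
    then have "l \<noteq> 0" using hne[of z] z by simp
    then show ?thesis using mv T \<sigma>0 by simp
  qed
  have "k \<noteq> 0" using k p \<sigma>T by auto
  have "q / p = (q * \<sigma> T) / (p * \<sigma> T)" using \<sigma>T by simp
  also have "\<dots> = of_int m / of_int k" using k m by simp
  finally show ?thesis by simp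
qed

theorem proposition5p5:
  fixes a p q :: real and f :: "R4 \<Rightarrow> real"
  assumes "a > 0"
    and "p \<noteq> 0 \<or> q \<noteq> 0"
    and "smooth_fun a f"
    and "zonal_flow a (\<lambda>v. f v *\<^sub>R (p *\<^sub>R dxi v + q *\<^sub>R dmu v))"
    and "\<exists>v\<in>M a. f v *\<^sub>R (p *\<^sub>R dxi v + q *\<^sub>R dmu v) \<noteq> 0"
  shows "S1_zonal_flow a (\<lambda>v. f v *\<^sub>R (p *\<^sub>R dxi v + q *\<^sub>R dmu v))
         \<longleftrightarrow> p = 0 \<or> q / p \<in> \<rat>"
proof -
  note a = assms(1) and pq = assms(2) and f = assms(3)
  define Z where "Z = (\<lambda>v. f v *\<^sub>R (p *\<^sub>R dxi v + q *\<^sub>R dmu v))"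
  have ZJ: "Z v = f v *\<^sub>R JJ p q v" for v by (simp add: Z_def JJ_def)
  have zf: "zonal_flow a Z" using assms(4) Z_def by simp
  have ex: "\<exists>v\<in>M a. Z v \<noteq> 0" using assms(5) Z_def by simp
  have "S1_zonal_flow a Z \<longleftrightarrow> p = 0 \<or> q / p \<in> \<rat>"
  proof
    assume S: "S1_zonal_flow a Z"
    show "p = 0 \<or> q / p \<in> \<rat>"
    proof (cases "p = 0")
      case True then show ?thesis by simp
    next
      case p: False
      show ?thesis
      proof (cases "q = 0")
        case True then show ?thesis by simp
      next
        case q: False
        obtain f' X where f': "smooth_fun a f'" and eq: "\<forall>v\<in>M a. Z v = f' v *\<^sub>R X v"
          and S1: "S1_generator a X"
          using S unfolding S1_zonal_flow_def by blast
        have Zs: "smooth_fun a Z" using zf by (simp add: zonal_flow_def vector_field_def)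
        have div0: "\<forall>v\<in>M a. divergence a Z v = 0" using zf by (simp add: zonal_flow_def)
        have dJ: "\<forall>w\<in>M a. frechet_derivative (ext a f) (at w) (JJ p q w) = 0"
          using div_fJ[OF a f Zs] ZJ div0 by simp
        obtain v where vM: "v \<in> M a" and Zv: "Z v \<noteq> 0" using ex by blast
        have fv: "f v \<noteq> 0" using Zv ZJ by auto
        obtain v0 where v0: "v0 \<in> M a" "f v0 \<noteq> 0" "fst v0 \<noteq> 0 \<or> fst (snd v0) \<noteq> 0"
          "fst (snd (snd v0)) \<noteq> 0 \<or> snd (snd (snd v0)) \<noteq> 0"
          using perturb[OF a f vM fv] by blast
        have eq': "\<forall>w\<in>M a. f w *\<^sub>R JJ p q w = f' w *\<^sub>R X w" using eq ZJ by simp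
        show ?thesis using only_if[OF a p q f f' dJ eq' S1 v0] by simp
      qed
    qed
  next
    assume r: "p = 0 \<or> q / p \<in> \<rat>"
    show "S1_zonal_flow a Z"
      unfolding S1_zonal_flow_def
      using zf f JJ_killing[OF a] S1_gen_JJ[OF pq r] ZJ by blast
  qed
  then show ?thesis by (simp add: Z_def)
qed

end
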